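(* If $\bar f_1,\dots,\bar f_k\in\mathbb{K}[S_M]$ is a regular sequence in $\mathbb{K}[S_M]$, then for each $i\le k$, the homogenization $\chi^{-1}(\bar f_i)$ is not a zero-divisor in $\mathbb{K}[S_M^h]/\chi^{-1}(\langle\bar f_1,\dots,\bar f_{i-1}\rangle)$, where $\chi^{-1}(J)$ denotes the ideal of $\mathbb{K}[S_M^h]$ generated by the homogenizations of all elements of the ideal $J$.
   Context: Let $\mathbb{K}$ be a field of characteristic $0$, $M\subset\mathbb{R}^n$ a polytope with $0\in M$, $S_M\subset\mathbb{Z}^n$ the affine semigroup generated by $M\cap\mathbb{Z}^n$ and $S_M^h\subset\mathbb{Z}^{n+1}$ the one generated by $\{(s,1):s\in M\cap\mathbb{Z}^n\}$, both assumed pointed. $\mathbb{K}[S]$ is the semigroup algebra with monomials $X^s$, $X^sX^t=X^{s+t}$. The affine degree $\delta^A(X^s)$ of a monomial of $\mathbb{K}[S_M]$ is the least $d\in\mathbb{N}$ with $(s,d)\in S_M^h$, and for $f=\sum c_sX^s\ne0$, $\delta^A(f)=\max\{\delta^A(X^s):c_s\ne0\}$. The homogenization of $f$ is $\chi^{-1}(f)=\sum c_sX^{(s,\delta^A(f))}\in\mathbb{K}[S_M^h]$. *)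

theory Defs
  imports "HOL-Analysis.Analysis"
begin

definition lattice_points :: "(real ^ 'n) set \<Rightarrow> (int ^ 'n) set" where
  "lattice_points M = {s. (\<chi> i. real_of_int (s $ i)) \<in> M}"

inductive_set gen_monoid :: "'a::comm_monoid_add set \<Rightarrow> 'a set" for G where
  zero: "0 \<in> gen_monoid G"
| gen: "g \<in> G \<Longrightarrow> g \<in> gen_monoid G"
| add: "x \<in> gen_monoid G \<Longrightarrow> y \<in> gen_monoid G \<Longrightarrow> x + y \<in> gen_monoid G"

definition S_M :: "(real ^ 'n) set \<Rightarrow> (int ^ 'n) set" where
  "S_M M = gen_monoid (lattice_points M)"

definition S_M_h :: "(real ^ 'n) set \<Rightarrow> ((int ^ 'n) \<times> int) set" where
  "S_M_h M = gen_monoid ((\<lambda>s. (s, 1)) ` lattice_points M)"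

definition pointed :: "'a::ab_group_add set \<Rightarrow> bool" where
  "pointed S \<longleftrightarrow> S \<inter> uminus ` S \<subseteq> {0}"

text \<open>Semigroup algebra K[S]: finitely supported K-valued functions on S
  (f s is the coefficient of the monomial X^s).\<close>
definition sg_supp :: "('a \<Rightarrow> 'k::zero) \<Rightarrow> 'a set" where
  "sg_supp f = {s. f s \<noteq> 0}"

definition salg :: "'a set \<Rightarrow> ('a \<Rightarrow> 'k::zero) set" where
  "salg S = {f. finite (sg_supp f) \<and> sg_supp f \<subseteq> S}"

text \<open>Multiplication: X^s X^t = X^(s+t), extended bilinearly.\<close>
definition smult_alg :: "('a::plus \<Rightarrow> 'k::comm_ring_1) \<Rightarrow> ('a \<Rightarrow> 'k) \<Rightarrow> 'a \<Rightarrow> 'k" where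
  "smult_alg f g = (\<lambda>x. \<Sum>p\<in>{p \<in> sg_supp f \<times> sg_supp g. fst p + snd p = x}. f (fst p) * g (snd p))"

definition sg_ideal_gen :: "'a::plus set \<Rightarrow> ('a \<Rightarrow> 'k::comm_ring_1) set \<Rightarrow> ('a \<Rightarrow> 'k) set" where
  "sg_ideal_gen S G = {(\<lambda>x. \<Sum>i<(m::nat). smult_alg (h i) (g i) x) | m h g.
      \<forall>i<m. h i \<in> salg S \<and> g i \<in> G}"

definition nonzerodiv_mod :: "'a::plus set \<Rightarrow> ('a \<Rightarrow> 'k::comm_ring_1) set \<Rightarrow> ('a \<Rightarrow> 'k) \<Rightarrow> bool" where
  "nonzerodiv_mod S I f \<longleftrightarrow> (\<forall>g \<in> salg S. smult_alg f g \<in> I \<longrightarrow> g \<in> I)"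

definition regular_seq :: "'a::plus set \<Rightarrow> ('a \<Rightarrow> 'k::comm_ring_1) list \<Rightarrow> bool" where
  "regular_seq S fs \<longleftrightarrow> set fs \<subseteq> salg S \<and>
     (\<forall>i < length fs. nonzerodiv_mod S (sg_ideal_gen S (set (take i fs))) (fs ! i)) \<and>
     sg_ideal_gen S (set fs) \<noteq> salg S"

definition adeg_mon :: "(real ^ 'n) set \<Rightarrow> int ^ 'n \<Rightarrow> nat" where
  "adeg_mon M s = (LEAST d::nat. (s, int d) \<in> S_M_h M)"

definition adeg :: "(real ^ 'n) set \<Rightarrow> (int ^ 'n \<Rightarrow> 'k::zero) \<Rightarrow> nat" where
  "adeg M f = Max (adeg_mon M ` sg_supp f)"

text \<open>Homogenization chi^-1(f) = sum c_s X^(s, deg f).\<close>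
definition homog :: "(real ^ 'n) set \<Rightarrow> (int ^ 'n \<Rightarrow> 'k::zero) \<Rightarrow> ((int ^ 'n) \<times> int \<Rightarrow> 'k)" where
  "homog M f = (\<lambda>(s, d). if d = int (adeg M f) then f s else 0)"

definition homog_ideal :: "(real ^ 'n) set \<Rightarrow> (int ^ 'n \<Rightarrow> 'k::comm_ring_1) set \<Rightarrow> ((int ^ 'n) \<times> int \<Rightarrow> 'k) set" where
  "homog_ideal M J = sg_ideal_gen (S_M_h M) (homog M ` J)"

end

theory Submission
  imports Defs "HOL-Library.Poly_Mapping"
begin


lemma smult_sup:
  assumes "finite A" "finite B" "sg_supp f \<subseteq> A" "sg_supp g \<subseteq> B"
  shows "smult_alg f g x = (\<Sum>p\<in>{p\<in>A\<times>B. fst p + snd p = x}. f (fst p) * g (snd p))"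
  unfolding smult_alg_def
proof (rule sum.mono_neutral_left)
  show "finite {p \<in> A \<times> B. fst p + snd p = x}" using assms by auto
  show "{p \<in> sg_supp f \<times> sg_supp g. fst p + snd p = x} \<subseteq> {p \<in> A \<times> B. fst p + snd p = x}"
    using assms by auto
  show "\<forall>i\<in>{p \<in> A \<times> B. fst p + snd p = x} - {p \<in> sg_supp f \<times> sg_supp g. fst p + snd p = x}.
       f (fst i) * g (snd i) = 0" by (auto simp: sg_supp_def)
qed

lemma smult_bridge:
  fixes f g :: "'a::monoid_add \<Rightarrow> 'k::comm_ring_1"
  assumes "finite (sg_supp f)" "finite (sg_supp g)"
  shows "smult_alg f g = poly_mapping.lookup (Abs_poly_mapping f * Abs_poly_mapping g)"
proof
  fix k
  have ff: "finite {a. f a \<noteq> 0}" "finite {a. g a \<noteq> 0}" using assms by (auto simp: sg_supp_def)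
  have "poly_mapping.lookup (Abs_poly_mapping f * Abs_poly_mapping g) k = prod_fun f g k"
    using ff by (simp add: lookup_mult prod_fun_def)
  also have "\<dots> = (\<Sum>(a, b). f a * g b when k = a + b)"
    using ff by (rule prod_fun_unfold_prod)
  also have "\<dots> = (\<Sum>p\<in>sg_supp f \<times> sg_supp g. (case p of (a,b) \<Rightarrow> f a * g b when k = a + b))"
    by (rule Sum_any.expand_superset) (use assms in \<open>auto simp: sg_supp_def\<close>)
  also have "\<dots> = (\<Sum>p\<in>{p \<in> sg_supp f \<times> sg_supp g. fst p + snd p = k}. f (fst p) * g (snd p))"
    using assms by (simp add: sum.inter_filter when_def case_prod_beta eq_commute)
  finally show "smult_alg f g k = poly_mapping.lookup (Abs_poly_mapping f * Abs_poly_mapping g) k"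
    by (simp add: smult_alg_def)
qed

lemma finite_supp_lookup[simp]: "finite (sg_supp (poly_mapping.lookup p))"
  by (simp add: sg_supp_def)

definition FS :: "('a \<Rightarrow> 'k::zero) set" where "FS = {f. finite (sg_supp f)}"

lemma FS_lookup[simp]: "poly_mapping.lookup p \<in> FS"
  by (simp add: FS_def sg_supp_def)

lemma lookup_Abs_FS[simp]: "f \<in> FS \<Longrightarrow> poly_mapping.lookup (Abs_poly_mapping f) = f"
  by (simp add: FS_def sg_supp_def)

lemma smult_FS: "f \<in> FS \<Longrightarrow> g \<in> FS \<Longrightarrow> smult_alg f (g::'a::monoid_add \<Rightarrow> 'k::comm_ring_1) \<in> FS"
  by (simp add: FS_def smult_bridge)

lemma smult_assoc:
  fixes f g h :: "'a::monoid_add \<Rightarrow> 'k::comm_ring_1"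
  assumes "f \<in> FS" "g \<in> FS" "h \<in> FS"
  shows "smult_alg (smult_alg f g) h = smult_alg f (smult_alg g h)"
  using assms by (simp add: smult_bridge FS_def mult.assoc)

lemma smult_comm:
  fixes f g :: "'a::comm_monoid_add \<Rightarrow> 'k::comm_ring_1"
  assumes "f \<in> FS" "g \<in> FS"
  shows "smult_alg f g = smult_alg g f"
  using assms by (simp add: smult_bridge FS_def mult.commute)

lemma sum_fun_lookup:
  assumes "\<forall>i\<in>A. u i \<in> FS"
  shows "(\<lambda>x. \<Sum>i\<in>A. u i x) = poly_mapping.lookup (\<Sum>i\<in>A. Abs_poly_mapping (u i))"
  using assms by (auto simp: lookup_sum fun_eq_iff)

lemma sum_FS: "\<forall>i\<in>A. u i \<in> FS \<Longrightarrow> (\<lambda>x. \<Sum>i\<in>A. u i x) \<in> FS"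
  by (subst sum_fun_lookup) auto

lemma smult_sum_right:
  fixes r :: "'a::monoid_add \<Rightarrow> 'k::comm_ring_1"
  assumes "r \<in> FS" "\<forall>i\<in>A. u i \<in> FS"
  shows "smult_alg r (\<lambda>x. \<Sum>i\<in>A. u i x) = (\<lambda>x. \<Sum>i\<in>A. smult_alg r (u i) x)"
proof -
  have "smult_alg r (\<lambda>x. \<Sum>i\<in>A. u i x) = poly_mapping.lookup (Abs_poly_mapping r * (\<Sum>i\<in>A. Abs_poly_mapping (u i)))"
    using assms by (simp add: sum_fun_lookup smult_bridge FS_def)
  also have "\<dots> = poly_mapping.lookup (\<Sum>i\<in>A. Abs_poly_mapping r * Abs_poly_mapping (u i))"
    by (simp add: sum_distrib_left)
  also have "\<dots> = (\<lambda>x. \<Sum>i\<in>A. smult_alg r (u i) x)"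
    using assms by (simp add: lookup_sum smult_bridge FS_def fun_eq_iff)
  finally show ?thesis .
qed

lemma supp_smult: "sg_supp (smult_alg f g) \<subseteq> {a + b | a b. a \<in> sg_supp f \<and> b \<in> sg_supp g}"
proof
  fix x assume "x \<in> sg_supp (smult_alg f g)"
  then have "smult_alg f g x \<noteq> 0" by (simp add: sg_supp_def)
  have "{p \<in> sg_supp f \<times> sg_supp g. fst p + snd p = x} \<noteq> {}"
  proof
    assume "{p \<in> sg_supp f \<times> sg_supp g. fst p + snd p = x} = {}"
    then have "smult_alg f g x = 0" unfolding smult_alg_def by (simp only: sum.empty)
    then show False using \<open>smult_alg f g x \<noteq> 0\<close> by simp
  qed
  then obtain p where "p \<in> sg_supp f \<times> sg_supp g" "fst p + snd p = x" by blast
  then show "x \<in> {a + b | a b. a \<in> sg_supp f \<and> b \<in> sg_supp g}"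
    by (intro CollectI exI[of _ "fst p"] exI[of _ "snd p"]) auto
qed

lemma salg_FS: "salg S \<subseteq> FS" by (auto simp: salg_def FS_def)

lemma ideal_sum_index:
  assumes "finite A" "\<forall>i\<in>A. h i \<in> salg S \<and> g i \<in> G"
  shows "(\<lambda>x. \<Sum>i\<in>A. smult_alg (h i) (g i) x) \<in> sg_ideal_gen S G"
proof -
  obtain b where b: "bij_betw b {0..<card A} A" using ex_bij_betw_nat_finite[OF assms(1)] by blast
  have "(\<lambda>x. \<Sum>i\<in>A. smult_alg (h i) (g i) x) = (\<lambda>x. \<Sum>j<card A. smult_alg (h (b j)) (g (b j)) x)"
  proof (rule ext)
    fix x show "(\<Sum>i\<in>A. smult_alg (h i) (g i) x) = (\<Sum>j<card A. smult_alg (h (b j)) (g (b j)) x)"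
      using sum.reindex_bij_betw[OF b, of "\<lambda>i. smult_alg (h i) (g i) x"] by (simp add: lessThan_atLeast0)
  qed
  moreover have "\<forall>j<card A. (h \<circ> b) j \<in> salg S \<and> (g \<circ> b) j \<in> G"
    using b assms(2) by (auto simp: bij_betw_def)
  ultimately show ?thesis unfolding sg_ideal_gen_def mem_Collect_eq
    by (intro exI[of _ "card A"] exI[of _ "h \<circ> b"] exI[of _ "g \<circ> b"]) simp
qed

lemma ideal_sum:
  assumes "finite A" "\<forall>i\<in>A. a i \<in> sg_ideal_gen S G"
  shows "(\<lambda>x. \<Sum>i\<in>A. a i x) \<in> sg_ideal_gen S G"
proof -
  have "\<forall>i\<in>A. \<exists>t. a i = (\<lambda>x. \<Sum>j<(fst t::nat). smult_alg (fst (snd t) j) (snd (snd t) j) x) \<and> (\<forall>j<fst t. fst (snd t) j \<in> salg S \<and> snd (snd t) j \<in> G)"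
  proof
    fix i assume "i \<in> A"
    then obtain m h g where "a i = (\<lambda>x. \<Sum>j<(m::nat). smult_alg (h j) (g j) x)" "\<forall>j<m. h j \<in> salg S \<and> g j \<in> G"
      using assms(2) unfolding sg_ideal_gen_def by blast
    then show "\<exists>t. a i = (\<lambda>x. \<Sum>j<(fst t::nat). smult_alg (fst (snd t) j) (snd (snd t) j) x) \<and> (\<forall>j<fst t. fst (snd t) j \<in> salg S \<and> snd (snd t) j \<in> G)"
      by (intro exI[of _ "(m, h, g)"]) simp
  qed
  then obtain T where T: "\<forall>i\<in>A. a i = (\<lambda>x. \<Sum>j<(fst (T i)::nat). smult_alg (fst (snd (T i)) j) (snd (snd (T i)) j) x) \<and> (\<forall>j<fst (T i). fst (snd (T i)) j \<in> salg S \<and> snd (snd (T i)) j \<in> G)"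
    by (rule bchoice[elim_format]) blast
  define m where "m = (\<lambda>i. fst (T i))"
  define h where "h = (\<lambda>i. fst (snd (T i)))"
  define g where "g = (\<lambda>i. snd (snd (T i)))"
  have mhg: "a i = (\<lambda>x. \<Sum>j<m i. smult_alg (h i j) (g i j) x) \<and> (\<forall>j<m i. h i j \<in> salg S \<and> g i j \<in> G)" if "i \<in> A" for i
    using T that unfolding m_def h_def g_def by blast
  have "(\<lambda>x. \<Sum>i\<in>A. a i x) = (\<lambda>x. \<Sum>i\<in>A. \<Sum>j<m i. smult_alg (h i j) (g i j) x)"
    using mhg by (intro ext sum.cong) auto
  also have "\<dots> = (\<lambda>x. \<Sum>p\<in>Sigma A (\<lambda>i. {..<m i}). smult_alg (case_prod h p) (case_prod g p) x)"
  proof (rule ext)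
    fix x
    show "(\<Sum>i\<in>A. \<Sum>j<m i. smult_alg (h i j) (g i j) x) = (\<Sum>p\<in>Sigma A (\<lambda>i. {..<m i}). smult_alg (case_prod h p) (case_prod g p) x)"
      using assms(1) by (subst sum.Sigma) (auto simp: case_prod_beta)
  qed
  also have "\<dots> \<in> sg_ideal_gen S G"
    using assms(1) by (intro ideal_sum_index) (auto dest: mhg)
  finally show ?thesis .
qed

lemma ideal_zero: "(\<lambda>x. 0) \<in> sg_ideal_gen S G"
  using ideal_sum_index[of "{}" _ S _ G] by simp

lemma ideal_gen:
  assumes "h \<in> salg S" "g \<in> G"
  shows "smult_alg h g \<in> sg_ideal_gen S G"
  using ideal_sum_index[of "{()}" "\<lambda>_. h" S "\<lambda>_. g" G] assms by simp

lemma ideal_FS: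
  fixes a :: "'a::monoid_add \<Rightarrow> 'k::comm_ring_1"
  assumes "G \<subseteq> FS" "a \<in> sg_ideal_gen S G"
  shows "a \<in> FS"
proof -
  obtain m h g where a: "a = (\<lambda>x. \<Sum>i<(m::nat). smult_alg (h i) (g i) x)" and hg: "\<forall>i<m. h i \<in> salg S \<and> g i \<in> G"
    using assms(2) unfolding sg_ideal_gen_def by blast
  have "\<forall>i\<in>{..<m}. smult_alg (h i) (g i) \<in> FS"
  proof
    fix i assume "i \<in> {..<m}"
    then have "h i \<in> FS" "g i \<in> FS" using hg assms(1) salg_FS by auto
    then show "smult_alg (h i) (g i) \<in> FS" by (rule smult_FS)
  qed
  then show ?thesis unfolding a by (rule sum_FS)
qed

lemma salg_smult:
  fixes r h :: "'a::comm_monoid_add \<Rightarrow> 'k::comm_ring_1"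
  assumes S: "\<forall>a\<in>S. \<forall>b\<in>S. a + b \<in> S" and "r \<in> salg S" "h \<in> salg S"
  shows "smult_alg r h \<in> salg S"
proof -
  have "smult_alg r h \<in> FS" using assms salg_FS smult_FS by blast
  moreover have "sg_supp (smult_alg r h) \<subseteq> S"
  proof
    fix x assume "x \<in> sg_supp (smult_alg r h)"
    then obtain a b where "x = a + b" "a \<in> sg_supp r" "b \<in> sg_supp h" using supp_smult[of r h] by blast
    then show "x \<in> S" using assms by (auto simp: salg_def)
  qed
  ultimately show ?thesis by (simp add: salg_def FS_def)
qed

lemma ideal_mul:
  fixes r :: "'a::comm_monoid_add \<Rightarrow> 'k::comm_ring_1"
  assumes S: "\<forall>a\<in>S. \<forall>b\<in>S. a + b \<in> S" and G: "G \<subseteq> FS" and r: "r \<in> salg S"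
    and a: "a \<in> sg_ideal_gen S G"
  shows "smult_alg r a \<in> sg_ideal_gen S G"
proof -
  obtain m h g where a: "a = (\<lambda>x. \<Sum>i<(m::nat). smult_alg (h i) (g i) x)" and hg: "\<forall>i<m. h i \<in> salg S \<and> g i \<in> G"
    using assms(4) unfolding sg_ideal_gen_def by blast
  have rF: "r \<in> FS" using r salg_FS by blast
  have hF: "h i \<in> FS" "g i \<in> FS" if "i < m" for i using hg G salg_FS that by auto
  have "smult_alg r a = (\<lambda>x. \<Sum>i<m. smult_alg r (smult_alg (h i) (g i)) x)"
    unfolding a by (rule smult_sum_right) (use rF hF smult_FS in auto)
  also have "\<dots> = (\<lambda>x. \<Sum>i<m. smult_alg (smult_alg r (h i)) (g i) x)"
  proof (intro ext sum.cong refl)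
    fix x i assume "i \<in> {..<m}"
    then show "smult_alg r (smult_alg (h i) (g i)) x = smult_alg (smult_alg r (h i)) (g i) x"
      using smult_assoc[OF rF hF] by simp
  qed
  also have "\<dots> \<in> sg_ideal_gen S G"
    by (intro ideal_sum_index) (use hg salg_smult[OF S r] in auto)
  finally show ?thesis .
qed



definition hcomp :: "int \<Rightarrow> ('a \<times> int \<Rightarrow> 'k::zero) \<Rightarrow> ('a \<times> int \<Rightarrow> 'k)" where
  "hcomp d g = (\<lambda>x. if snd x = d then g x else 0)"

definition deh :: "('a \<times> int \<Rightarrow> 'k::comm_monoid_add) \<Rightarrow> 'a \<Rightarrow> 'k" where
  "deh g s = (\<Sum>a\<in>{a\<in>sg_supp g. fst a = s}. g a)"

lemma supp_hcomp: "sg_supp (hcomp d g) \<subseteq> sg_supp g"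
  by (auto simp: sg_supp_def hcomp_def)

lemma hcomp_FS: "g \<in> FS \<Longrightarrow> hcomp d g \<in> FS"
  using supp_hcomp by (metis FS_def finite_subset mem_Collect_eq)

lemma hcomp_salg: "g \<in> salg S \<Longrightarrow> hcomp d g \<in> salg S"
  using supp_hcomp[of d g] by (auto simp: salg_def intro: finite_subset)

lemma hcomp_smult:
  fixes A F :: "'a::comm_monoid_add \<times> int \<Rightarrow> 'k::comm_ring_1"
  assumes "A \<in> FS" "F \<in> FS" "sg_supp F \<subseteq> {p. snd p = c}"
  shows "hcomp e (smult_alg A F) = smult_alg (hcomp (e - c) A) F"
proof
  fix x
  have fin: "finite (sg_supp A)" "finite (sg_supp F)" using assms by (auto simp: FS_def)
  let ?P = "{p \<in> sg_supp A \<times> sg_supp F. fst p + snd p = x}"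
  have L: "smult_alg A F x = (\<Sum>p\<in>?P. A (fst p) * F (snd p))"
    by (rule smult_sup) (use fin in auto)
  have R: "smult_alg (hcomp (e - c) A) F x = (\<Sum>p\<in>?P. hcomp (e - c) A (fst p) * F (snd p))"
    by (rule smult_sup) (use fin supp_hcomp in auto)
  have deg: "snd (fst p) = snd x - c" if "p \<in> ?P" for p
  proof -
    have "snd (snd p) = c" using that assms(3) by auto
    moreover have "snd (fst p) + snd (snd p) = snd x" using that by auto
    ultimately show ?thesis by simp
  qed
  have c: "hcomp e (smult_alg A F) x = (if snd x = e then smult_alg A F x else 0)" by (simp add: hcomp_def)
  show "hcomp e (smult_alg A F) x = smult_alg (hcomp (e - c) A) F x"
  proof (cases "snd x = e")
    case True
    then show ?thesis unfolding c R L using deg by (auto simp: hcomp_def intro!: sum.cong)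
  next
    case False
    then show ?thesis unfolding c R using deg by (auto simp: hcomp_def intro!: sum.neutral)
  qed
qed

lemma hcomp_sum: "hcomp e (\<lambda>x. \<Sum>i\<in>I. u i x) = (\<lambda>x. \<Sum>i\<in>I. hcomp e (u i) x)"
  by (auto simp: hcomp_def fun_eq_iff)

lemma sum_hcomp:
  assumes "g \<in> FS"
  shows "g = (\<lambda>x. \<Sum>d\<in>snd ` sg_supp g. hcomp d g x)"
proof
  fix x
  have "(\<Sum>d\<in>snd ` sg_supp g. hcomp d g x) = (\<Sum>d\<in>snd ` sg_supp g. if d = snd x then g x else 0)"
    by (rule sum.cong) (auto simp: hcomp_def)
  also have "\<dots> = (if snd x \<in> snd ` sg_supp g then g x else 0)"
    using assms by (simp add: FS_def sum.delta)
  also have "\<dots> = g x" by (auto simp: sg_supp_def)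
  finally show "g x = (\<Sum>d\<in>snd ` sg_supp g. hcomp d g x)" by simp
qed

lemma deh_sup:
  assumes "finite A" "sg_supp u \<subseteq> A"
  shows "deh u s = (\<Sum>a\<in>{a\<in>A. fst a = s}. u a)"
  unfolding deh_def
  by (rule sum.mono_neutral_left) (use assms in \<open>auto simp: sg_supp_def\<close>)

lemma supp_deh: "sg_supp (deh u) \<subseteq> fst ` sg_supp u"
proof
  fix s assume "s \<in> sg_supp (deh u)"
  then have "deh u s \<noteq> 0" by (simp add: sg_supp_def)
  then have "{a\<in>sg_supp u. fst a = s} \<noteq> {}" unfolding deh_def by (metis sum.empty)
  then show "s \<in> fst ` sg_supp u" by force
qed

lemma deh_FS: "u \<in> FS \<Longrightarrow> deh u \<in> FS"
  using supp_deh[of u] by (auto simp: FS_def intro: finite_subset)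

lemma deh_salg:
  assumes "u \<in> salg H" "\<forall>p\<in>H. fst p \<in> S"
  shows "deh u \<in> salg S"
  using supp_deh[of u] assms by (auto simp: salg_def intro: finite_subset)

lemma deh_sum:
  assumes "finite I" "\<forall>i\<in>I. u i \<in> FS"
  shows "deh (\<lambda>x. \<Sum>i\<in>I. u i x) = (\<lambda>s. \<Sum>i\<in>I. deh (u i) s)"
proof
  fix s
  let ?A = "\<Union>i\<in>I. sg_supp (u i)"
  have fA: "finite ?A" using assms by (auto simp: FS_def)
  have "deh (\<lambda>x. \<Sum>i\<in>I. u i x) s = (\<Sum>a\<in>{a\<in>?A. fst a = s}. \<Sum>i\<in>I. u i a)"
    by (rule deh_sup[OF fA]) (auto simp: sg_supp_def elim!: sum.not_neutral_contains_not_neutral)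
  also have "\<dots> = (\<Sum>i\<in>I. \<Sum>a\<in>{a\<in>?A. fst a = s}. u i a)"
    by (rule sum.swap)
  also have "\<dots> = (\<Sum>i\<in>I. deh (u i) s)"
    by (rule sum.cong[OF refl], rule deh_sup[symmetric]) (use fA in auto)
  finally show "deh (\<lambda>x. \<Sum>i\<in>I. u i x) s = (\<Sum>i\<in>I. deh (u i) s)" .
qed

lemma deh_hcomp: "deh (hcomp d g) s = g (s, d)"
proof -
  have "{a \<in> sg_supp (hcomp d g). fst a = s} = (if g (s, d) = 0 then {} else {(s, d)})"
    by (auto simp: sg_supp_def hcomp_def)
  then show ?thesis by (simp add: deh_def hcomp_def)
qed

lemma deh_hom: "deh (\<lambda>(s, e). if e = c then f s else 0) = f"
proof
  fix s
  have "{a \<in> sg_supp (\<lambda>(s, e). if e = c then f s else 0). fst a = s} = (if f s = 0 then {} else {(s, c)})"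
    by (auto simp: sg_supp_def split: if_splits)
  then show "deh (\<lambda>(s, e). if e = c then f s else 0) s = f s" by (simp add: deh_def)
qed

lemma shift_smult:
  fixes B :: "'a::ab_group_add \<Rightarrow> 'k::comm_ring_1"
  assumes "B \<in> FS"
  shows "smult_alg (\<lambda>x. if x = a then 1 else 0) B = (\<lambda>x. B (x - a))"
proof
  fix x
  have "smult_alg (\<lambda>x. if x = a then 1 else 0) B x =
     (\<Sum>p\<in>{p\<in>{a} \<times> insert (x - a) (sg_supp B). fst p + snd p = x}. (if fst p = a then 1 else 0) * B (snd p))"
    by (rule smult_sup) (use assms in \<open>auto simp: FS_def sg_supp_def\<close>)
  also have "{p\<in>{a} \<times> insert (x - a) (sg_supp B). fst p + snd p = x} = {(a, x - a)}"
    by (auto simp: algebra_simps)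
  finally show "smult_alg (\<lambda>x. if x = a then 1 else 0) B x = B (x - a)" by simp
qed



lemma deh_mult:
  fixes f g :: "'a::comm_monoid_add \<times> int \<Rightarrow> 'k::comm_ring_1"
  assumes "f \<in> FS" "g \<in> FS"
  shows "deh (smult_alg f g) = smult_alg (deh f) (deh g)"
proof
  fix s
  define A where "A = sg_supp f"
  define B where "B = sg_supp g"
  define P where "P = A \<times> B"
  define \<phi> where "\<phi> = (\<lambda>p::('a \<times> int) \<times> ('a \<times> int). fst p + snd p)"
  define \<psi> where "\<psi> = (\<lambda>p::('a \<times> int) \<times> ('a \<times> int). (fst (fst p), fst (snd p)))"
  define w where "w = (\<lambda>p::('a \<times> int) \<times> ('a \<times> int). f (fst p) * g (snd p))"
  define S where "S = {p\<in>P. fst (\<phi> p) = s}"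
  have fA: "finite A" "finite B" "finite P" using assms by (auto simp: A_def B_def P_def FS_def)
  have fS: "finite S" using fA by (auto simp: S_def)
  define C where "C = \<phi> ` P"
  have fC: "finite C" using fA by (simp add: C_def)
  have suppC: "sg_supp (smult_alg f g) \<subseteq> C"
    using supp_smult[of f g] by (force simp: C_def \<phi>_def P_def A_def B_def)
  have "deh (smult_alg f g) s = (\<Sum>a\<in>{a\<in>C. fst a = s}. smult_alg f g a)"
    by (rule deh_sup[OF fC suppC])
  also have "\<dots> = (\<Sum>a\<in>{a\<in>C. fst a = s}. \<Sum>p\<in>{p\<in>S. \<phi> p = a}. w p)"
  proof (rule sum.cong[OF refl])
    fix a assume a: "a \<in> {a\<in>C. fst a = s}"
    have "smult_alg f g a = (\<Sum>p\<in>{p\<in>A\<times>B. fst p + snd p = a}. f (fst p) * g (snd p))"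
      by (rule smult_sup) (use fA in \<open>auto simp: A_def B_def\<close>)
    also have "{p\<in>A\<times>B. fst p + snd p = a} = {p\<in>S. \<phi> p = a}"
      using a by (auto simp: S_def P_def \<phi>_def)
    finally show "smult_alg f g a = (\<Sum>p\<in>{p\<in>S. \<phi> p = a}. w p)" by (simp add: w_def)
  qed
  also have "\<dots> = sum w S"
    by (rule sum.group[OF fS]) (use fC in \<open>auto simp: S_def C_def\<close>)
  finally have L: "deh (smult_alg f g) s = sum w S" .
  define Q where "Q = {q\<in>fst ` A \<times> fst ` B. fst q + snd q = s}"
  have fQ: "finite Q" using fA by (auto simp: Q_def)
  have "smult_alg (deh f) (deh g) s = (\<Sum>q\<in>Q. deh f (fst q) * deh g (snd q))"
    unfolding Q_def by (rule smult_sup) (use fA supp_deh[of f] supp_deh[of g] in \<open>auto simp: A_def B_def\<close>)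
  also have "\<dots> = (\<Sum>q\<in>Q. \<Sum>p\<in>{p\<in>S. \<psi> p = q}. w p)"
  proof (rule sum.cong[OF refl])
    fix q assume q: "q \<in> Q"
    have "deh f (fst q) * deh g (snd q) =
      (\<Sum>a\<in>{a\<in>A. fst a = fst q}. f a) * (\<Sum>b\<in>{b\<in>B. fst b = snd q}. g b)"
      by (simp add: deh_def A_def B_def)
    also have "\<dots> = (\<Sum>a\<in>{a\<in>A. fst a = fst q}. \<Sum>b\<in>{b\<in>B. fst b = snd q}. f a * g b)"
      by (rule sum_product)
    also have "\<dots> = (\<Sum>p\<in>{a\<in>A. fst a = fst q} \<times> {b\<in>B. fst b = snd q}. w p)"
      by (subst sum.cartesian_product) (simp add: w_def case_prod_beta)
    also have "{a\<in>A. fst a = fst q} \<times> {b\<in>B. fst b = snd q} = {p\<in>S. \<psi> p = q}"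
      using q by (auto simp: S_def P_def \<psi>_def \<phi>_def Q_def)
    finally show "deh f (fst q) * deh g (snd q) = (\<Sum>p\<in>{p\<in>S. \<psi> p = q}. w p)" .
  qed
  also have "\<dots> = sum w S"
    by (rule sum.group[OF fS fQ]) (auto simp: S_def Q_def \<psi>_def \<phi>_def P_def)
  finally show "deh (smult_alg f g) s = smult_alg (deh f) (deh g) s" using L by simp
qed



lemma gm_add: "x \<in> gen_monoid G \<Longrightarrow> y \<in> gen_monoid G \<Longrightarrow> x + y \<in> gen_monoid G"
  by (rule gen_monoid.add)

lemma H_fst: "p \<in> S_M_h M \<Longrightarrow> fst p \<in> S_M M \<and> snd p \<ge> 0"
  unfolding S_M_h_def S_M_def
  by (induction rule: gen_monoid.induct) (auto intro: gen_monoid.intros)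

lemma zero_lattice: fixes M :: "(real^'n) set" shows "0 \<in> M \<Longrightarrow> 0 \<in> lattice_points M"
proof -
  assume "0 \<in> M"
  moreover have "(\<chi> i. real_of_int ((0::int^'n) $ i)) = (0::real^'n)" by (simp add: vec_eq_iff)
  ultimately show ?thesis by (simp add: lattice_points_def)
qed

lemma H_01: "0 \<in> M \<Longrightarrow> (0, 1) \<in> S_M_h M"
  unfolding S_M_h_def using zero_lattice by (blast intro: gen_monoid.gen)

lemma H_up: assumes "0 \<in> M" "p \<in> S_M_h M" shows "p + (0, int k) \<in> S_M_h M"
proof (induction k)
  case 0 then show ?case using assms by (simp add: zero_prod_def[symmetric])
next
  case (Suc k)
  have "p + (0, int (Suc k)) = (p + (0, int k)) + (0, 1)" by simp
  then show ?case using Suc H_01[OF assms(1)] unfolding S_M_h_def by (metis gen_monoid.add)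
qed

lemma S_H: "s \<in> S_M M \<Longrightarrow> \<exists>d::nat. (s, int d) \<in> S_M_h M"
  unfolding S_M_h_def S_M_def
proof (induction rule: gen_monoid.induct)
  case zero
  then show ?case by (rule exI[of _ 0]) (metis gen_monoid.zero of_nat_0 zero_prod_def)
next
  case (gen g)
  then show ?case by (intro exI[of _ 1]) (auto intro: gen_monoid.gen)
next
  case (add x y)
  then obtain d1 d2 where "(x, int d1) \<in> gen_monoid ((\<lambda>s. (s, 1)) ` lattice_points M)"
    "(y, int d2) \<in> gen_monoid ((\<lambda>s. (s, 1)) ` lattice_points M)" by blast
  then have "(x, int d1) + (y, int d2) \<in> gen_monoid ((\<lambda>s. (s, 1)) ` lattice_points M)" by (rule gen_monoid.add)
  then show ?case by (intro exI[of _ "d1 + d2"]) simp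
qed

lemma adeg_mon_in: "s \<in> S_M M \<Longrightarrow> (s, int (adeg_mon M s)) \<in> S_M_h M"
  unfolding adeg_mon_def using S_H by (rule LeastI_ex)

lemma adeg_mon_le: "(s, int d) \<in> S_M_h M \<Longrightarrow> adeg_mon M s \<le> d"
  unfolding adeg_mon_def by (rule Least_le)

lemma H_upto: assumes "0 \<in> M" "s \<in> S_M M" "adeg_mon M s \<le> D" shows "(s, int D) \<in> S_M_h M"
proof -
  have "(s, int (adeg_mon M s)) + (0, int (D - adeg_mon M s)) \<in> S_M_h M"
    using H_up[OF assms(1) adeg_mon_in[OF assms(2)]] .
  then show ?thesis using assms(3) by (simp add: of_nat_diff)
qed

lemma S_closed: "\<forall>a\<in>S_M M. \<forall>b\<in>S_M M. a + b \<in> S_M M"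
  unfolding S_M_def by (auto intro: gen_monoid.add)

lemma H_closed: "\<forall>a\<in>S_M_h M. \<forall>b\<in>S_M_h M. a + b \<in> S_M_h M"
  unfolding S_M_h_def by (auto intro: gen_monoid.add)

lemma homog_eq: "homog M f = (\<lambda>(s, e). if e = int (adeg M f) then f s else 0)"
  by (simp add: homog_def)

lemma deh_homog: "deh (homog M f) = f"
  unfolding homog_eq by (rule deh_hom)

lemma supp_homog: "sg_supp (homog M f) = (\<lambda>s. (s, int (adeg M f))) ` sg_supp f"
  by (auto simp: sg_supp_def homog_def split: if_splits)

lemma homog_deg: "sg_supp (homog M f) \<subseteq> {p. snd p = int (adeg M f)}"
  by (auto simp: supp_homog)

lemma homog_salg:
  assumes "0 \<in> M" "f \<in> salg (S_M M)"
  shows "homog M f \<in> salg (S_M_h M)"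
proof -
  have fin: "finite (sg_supp f)" and sub: "sg_supp f \<subseteq> S_M M" using assms by (auto simp: salg_def)
  have "(s, int (adeg M f)) \<in> S_M_h M" if "s \<in> sg_supp f" for s
  proof (rule H_upto[OF assms(1)])
    show "s \<in> S_M M" using sub that by auto
    show "adeg_mon M s \<le> adeg M f" unfolding adeg_def using fin that by auto
  qed
  then show ?thesis using fin by (auto simp: salg_def supp_homog)
qed

lemma homog_FS: "f \<in> FS \<Longrightarrow> homog M f \<in> FS"
  by (simp add: FS_def supp_homog)



theorem mainTheorem11:
  fixes M :: "(real ^ 'n) set" and fs :: "(int ^ 'n \<Rightarrow> 'k::field_char_0) list"
  assumes "polytope M" and "0 \<in> M"
    and "pointed (S_M M)" and "pointed (S_M_h M)"
    and "regular_seq (S_M M) fs"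
  shows "\<forall>i < length fs. nonzerodiv_mod (S_M_h M)
           (homog_ideal M (sg_ideal_gen (S_M M) (set (take i fs)))) (homog M (fs ! i))"
proof (intro allI impI)
  fix i assume i: "i < length fs"
  have reg: "set fs \<subseteq> salg (S_M M)"
    "\<forall>i<length fs. nonzerodiv_mod (S_M M) (sg_ideal_gen (S_M M) (set (take i fs))) (fs ! i)"
    using assms(5) by (auto simp: regular_seq_def)
  define G where "G = set (take i fs)"
  define J where "J = sg_ideal_gen (S_M M) G"
  define Ih where "Ih = homog_ideal M J"
  have Ih': "Ih = sg_ideal_gen (S_M_h M) (homog M ` J)" by (simp add: Ih_def homog_ideal_def)
  have GFS: "G \<subseteq> FS"
  proof -
    have "set (take i fs) \<subseteq> set fs" by (rule set_take_subset)
    also have "\<dots> \<subseteq> salg (S_M M)" by (rule reg(1))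
    also have "\<dots> \<subseteq> FS" by (rule salg_FS)
    finally show ?thesis unfolding G_def .
  qed
  have JFS: "r \<in> FS" if "r \<in> J" for r using ideal_FS[OF GFS] that unfolding J_def by blast
  define f where "f = fs ! i"
  have fS: "f \<in> salg (S_M M)" using reg(1) i unfolding f_def by auto
  have fFS: "f \<in> FS" using fS salg_FS by blast
  have nzd: "nonzerodiv_mod (S_M M) J f" using reg(2) i unfolding J_def G_def f_def by blast
  define F where "F = homog M f"
  define D where "D = adeg M f"
  have FFS: "F \<in> FS" unfolding F_def using fFS by (rule homog_FS)
  have Fdeg: "sg_supp F \<subseteq> {p. snd p = int D}" unfolding F_def D_def by (rule homog_deg)
  have HS: "\<forall>p\<in>S_M_h M. fst p \<in> S_M M" using H_fst by blast

  have Ihomog: "hcomp e a \<in> Ih" if aI: "a \<in> Ih" for a e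
  proof -
    obtain m h q where a: "a = (\<lambda>x. \<Sum>j<(m::nat). smult_alg (h j) (q j) x)"
      and hq: "\<forall>j<m. h j \<in> salg (S_M_h M) \<and> q j \<in> homog M ` J"
      using aI unfolding Ih' sg_ideal_gen_def by blast
    have "\<forall>j<m. \<exists>r. r \<in> J \<and> q j = homog M r" using hq by blast
    then obtain r where r: "\<forall>j<m. r j \<in> J \<and> q j = homog M (r j)" by metis
    have "hcomp e a = (\<lambda>x. \<Sum>j<m. hcomp e (smult_alg (h j) (q j)) x)" unfolding a by (rule hcomp_sum)
    also have "\<dots> = (\<lambda>x. \<Sum>j<m. smult_alg (hcomp (e - int (adeg M (r j))) (h j)) (q j) x)"
    proof (intro ext sum.cong refl)
      fix x j assume "j \<in> {..<m}"
      then have j: "j < m" by simp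
      have "h j \<in> FS" using hq j salg_FS by blast
      moreover have "q j \<in> FS" using r j JFS homog_FS by metis
      moreover have "sg_supp (q j) \<subseteq> {p. snd p = int (adeg M (r j))}" using r j homog_deg by metis
      ultimately show "hcomp e (smult_alg (h j) (q j)) x = smult_alg (hcomp (e - int (adeg M (r j))) (h j)) (q j) x"
        using hcomp_smult by metis
    qed
    also have "\<dots> \<in> Ih" unfolding Ih'
      by (rule ideal_sum_index) (use hq in \<open>auto intro: hcomp_salg\<close>)
    finally show ?thesis .
  qed

  have Ideh: "deh a \<in> J" if aI: "a \<in> Ih" for a
  proof -
    obtain m h q where a: "a = (\<lambda>x. \<Sum>j<(m::nat). smult_alg (h j) (q j) x)"
      and hq: "\<forall>j<m. h j \<in> salg (S_M_h M) \<and> q j \<in> homog M ` J"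
      using aI unfolding Ih' sg_ideal_gen_def by blast
    have "\<forall>j<m. \<exists>r. r \<in> J \<and> q j = homog M r" using hq by blast
    then obtain r where r: "\<forall>j<m. r j \<in> J \<and> q j = homog M (r j)" by metis
    have hF: "h j \<in> FS" "q j \<in> FS" if "j < m" for j
      using hq r that salg_FS JFS homog_FS by (metis subsetD)+
    have "deh a = (\<lambda>s. \<Sum>j<m. deh (smult_alg (h j) (q j)) s)"
      unfolding a by (rule deh_sum) (auto intro: smult_FS hF)
    also have "\<dots> = (\<lambda>s. \<Sum>j<m. smult_alg (deh (h j)) (r j) s)"
    proof (intro ext sum.cong refl)
      fix s j assume "j \<in> {..<m}"
      then have j: "j < m" by simp
      show "deh (smult_alg (h j) (q j)) s = smult_alg (deh (h j)) (r j) s"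
        using deh_mult[OF hF[OF j]] r j deh_homog by metis
    qed
    also have "\<dots> \<in> J" unfolding J_def
    proof (rule ideal_sum)
      show "\<forall>j\<in>{..<m}. smult_alg (deh (h j)) (r j) \<in> sg_ideal_gen (S_M M) G"
      proof
        fix j assume "j \<in> {..<m}"
        then have j: "j < m" by simp
        have "deh (h j) \<in> salg (S_M M)" using deh_salg hq j HS by blast
        then show "smult_alg (deh (h j)) (r j) \<in> sg_ideal_gen (S_M M) G"
          using ideal_mul[OF S_closed GFS] r j J_def by blast
      qed
    qed simp
    finally show ?thesis .
  qed

  show "nonzerodiv_mod (S_M_h M) (homog_ideal M (sg_ideal_gen (S_M M) (set (take i fs)))) (homog M (fs ! i))"
    unfolding nonzerodiv_mod_def Ih_def[symmetric, unfolded J_def G_def] F_def[unfolded f_def, symmetric]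
  proof (intro ballI impI)
    fix g assume g: "g \<in> salg (S_M_h M)" and Fg: "smult_alg F g \<in> Ih"
    have gFS: "g \<in> FS" using g salg_FS by blast
    have comps: "\<forall>d\<in>snd ` sg_supp g. hcomp d g \<in> Ih"
    proof
      fix d assume d: "d \<in> snd ` sg_supp g"
      define gd where "gd = hcomp d g"
      have gdH: "gd \<in> salg (S_M_h M)" unfolding gd_def using g by (rule hcomp_salg)
      have gdFS: "gd \<in> FS" using gdH salg_FS by blast
      have "hcomp (d + int D) (smult_alg F g) \<in> Ih" using Fg by (rule Ihomog)
      also have "hcomp (d + int D) (smult_alg F g) = smult_alg gd F"
        using smult_comm[OF FFS gFS] hcomp_smult[OF gFS FFS Fdeg, of "d + int D"] by (simp add: gd_def)
      finally have gdF: "smult_alg gd F \<in> Ih" .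
      have "deh (smult_alg gd F) = smult_alg (deh gd) f"
        using deh_mult[OF gdFS FFS] deh_homog[of M f] by (simp add: F_def)
      also have "\<dots> = smult_alg f (deh gd)" using smult_comm[OF deh_FS[OF gdFS] fFS] .
      finally have "smult_alg f (deh gd) \<in> J" using Ideh[OF gdF] by simp
      moreover have "deh gd \<in> salg (S_M M)" using deh_salg[OF gdH HS] .
      ultimately have uJ: "deh gd \<in> J" using nzd unfolding nonzerodiv_mod_def by blast
      define u where "u = deh gd"
      have u: "u s = g (s, d)" for s unfolding u_def gd_def by (rule deh_hcomp)
      obtain s0 where s0: "g (s0, d) \<noteq> 0" using d by (auto simp: sg_supp_def)
      have gH: "p \<in> S_M_h M" if "g p \<noteq> 0" for p using g that by (auto simp: salg_def sg_supp_def)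
      have d0: "d \<ge> 0" using H_fst[OF gH[OF s0]] by simp
      have bound: "adeg_mon M s \<le> nat d" if "s \<in> sg_supp u" for s
      proof (rule adeg_mon_le)
        show "(s, int (nat d)) \<in> S_M_h M" using gH[of "(s, d)"] that d0 by (simp add: u sg_supp_def)
      qed
      have finu: "finite (sg_supp u)" using deh_FS[OF gdFS] by (simp add: u_def FS_def)
      have s0u: "s0 \<in> sg_supp u" using s0 by (simp add: u sg_supp_def)
      have D'le: "adeg M u \<le> nat d" unfolding adeg_def using finu s0u bound by (subst Max_le_iff) auto
      define k where "k = d - int (adeg M u)"
      have k0: "k \<ge> 0" using D'le d0 unfolding k_def by linarith
      define X where "X = (\<lambda>x::(int^'n) \<times> int. if x = (0, k) then (1::'k) else 0)"
      have "(0::(int^'n) \<times> int) + (0, int (nat k)) \<in> S_M_h M"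
        by (rule H_up[OF assms(2)]) (simp add: S_M_h_def gen_monoid.zero)
      then have kH: "(0, k) \<in> S_M_h M" using k0 by simp
      have XH: "X \<in> salg (S_M_h M)"
      proof -
        have "sg_supp X = {(0, k)}" by (auto simp: X_def sg_supp_def)
        then show ?thesis using kH by (simp add: salg_def)
      qed
      have huFS: "homog M u \<in> FS" using deh_FS[OF gdFS] homog_FS u_def by blast
      have "smult_alg X (homog M u) = (\<lambda>x. homog M u (x - (0, k)))"
        unfolding X_def by (rule shift_smult[OF huFS])
      also have "\<dots> = gd"
      proof
        fix x :: "(int^'n) \<times> int"
        obtain a b where x: "x = (a, b)" by (cases x)
        show "homog M u (x - (0, k)) = gd x"
          unfolding x by (auto simp: homog_def gd_def hcomp_def u k_def)
      qed
      finally have "gd = smult_alg X (homog M u)" by simp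
      also have "\<dots> \<in> Ih" unfolding Ih' using XH uJ u_def by (auto intro!: ideal_gen)
      finally show "hcomp d g \<in> Ih" by (simp add: gd_def)
    qed
    have "g = (\<lambda>x. \<Sum>d\<in>snd ` sg_supp g. hcomp d g x)" using gFS by (rule sum_hcomp)
    also have "\<dots> \<in> Ih" unfolding Ih'
      by (rule ideal_sum) (use comps gFS in \<open>auto simp: FS_def Ih'\<close>)
    finally show "g \<in> Ih" .
  qed
qed

end
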